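(* Let $m\ge 1$ and let $t_1,\dots,t_m$ be real numbers with $0<t_i\le 1$ for all $i\in\{1,\dots,m\}$. Then $$\sum_{i=1}^{m}\frac{1-t_i}{t_i}\;\ge\;\sum_{i=1}^{m}\frac{t_i(1-t_i)}{\left(\frac{1}{m}\sum_{j=1}^{m}t_j\right)^{2}}.$$ *)

theory Defs
  imports Complex_Main
begin

end

theory Submission
  imports Defs
begin

lemma term_ineq:
  fixes x a :: real
  assumes "0 < x" "0 < a"
  shows "(1 - x) / x - x * (1 - x) / a^2 \<ge> 2/a - 2*x/a^2 + 2*x/a - 2"
proof -
  have h1: "1/x \<ge> 2/a - x/a^2"
  proof -
    have "1/x - (2/a - x/a^2) = (a - x)^2 / (x * a^2)"
      using assms by (simp add: field_simps power2_eq_square)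
    also have "\<dots> \<ge> 0" using assms by simp
    finally show ?thesis by simp
  qed
  have h2: "x^2/a^2 \<ge> 2*x/a - 1"
  proof -
    have "x^2/a^2 - (2*x/a - 1) = (x - a)^2 / a^2"
      using assms by (simp add: field_simps power2_eq_square)
    also have "\<dots> \<ge> 0" by simp
    finally show ?thesis by simp
  qed
  have "(1 - x) / x - x * (1 - x) / a^2 = 1/x - 1 - x/a^2 + x^2/a^2"
    using assms by (simp add: field_simps power2_eq_square)
  with h1 h2 show ?thesis by linarith
qed

theorem lemma3p2:
  fixes m :: nat and t :: "nat \<Rightarrow> real"
  assumes "m \<ge> 1"
    and "\<And>i. i \<in> {1..m} \<Longrightarrow> 0 < t i \<and> t i \<le> 1"
  shows "(\<Sum>i=1..m. (1 - t i) / t i)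
         \<ge> (\<Sum>i=1..m. t i * (1 - t i) / ((1 / real m) * (\<Sum>j=1..m. t j))^2)"
proof -
  define S where "S = (\<Sum>j=1..m. t j)"
  define a where "a = (1 / real m) * S"
  have Spos: "S > 0" unfolding S_def
    using assms by (intro sum_pos) auto
  have apos: "a > 0" unfolding a_def using Spos assms(1) by simp
  have Sa: "S = real m * a" unfolding a_def using assms(1) by simp
  have "(\<Sum>i=1..m. (1 - t i) / t i - t i * (1 - t i) / a^2)
      \<ge> (\<Sum>i=1..m. 2/a - 2*t i/a^2 + 2*t i/a - 2)"
    by (intro sum_mono term_ineq) (use assms apos in auto)
  moreover have "(\<Sum>i=1..m. 2/a - 2*t i/a^2 + 2*t i/a - 2)
      = real m * (2/a) - 2*S/a^2 + 2*S/a - 2 * real m"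
    unfolding S_def by (simp add: sum.distrib sum_subtractf sum_divide_distrib[symmetric] sum_distrib_left[symmetric])
  moreover have "real m * (2/a) - 2*S/a^2 + 2*S/a - 2 * real m = 0"
    unfolding Sa using apos by (simp add: field_simps power2_eq_square)
  ultimately have "(\<Sum>i=1..m. (1 - t i) / t i - t i * (1 - t i) / a^2) \<ge> 0" by linarith
  then show ?thesis unfolding a_def S_def by (simp add: sum_subtractf)
qed

end
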